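(* Let $A, A_1,\dots,A_k$ ($k\ge2$) be nonempty subsets of $X$ (or of $X^*$). Then \[ \Big[\overline{\operatorname{co}}\big(A\cup A_1\cup\cdots\cup A_k\big)\Big]_\infty=\Big[\overline{\operatorname{co}}\big(A\cup(A_1+\cdots+A_k)\big)\Big]_\infty . \]
   Context: $X$ is a real separated locally convex space with dual $X^*$ carrying the weak$^*$ topology (closures in $X^*$ are weak$^*$-closures). $\overline{\operatorname{co}}$ denotes the closed convex hull, and $A_1+\cdots+A_k$ the Minkowski sum. For a nonempty closed convex set $C$, its recession cone is $C_\infty:=\{y:\ z+\lambda y\in C\text{ for some } z\in C \text{ and all }\lambda\ge 0\}$. *)

theory Defs
  imports "HOL-Analysis.Analysis"
begin

definition lc_tvs :: "'a::{real_vector,t2_space} itself \<Rightarrow> bool" where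
  "lc_tvs _ \<longleftrightarrow>
     continuous_on UNIV (\<lambda>p::'a \<times> 'a. fst p + snd p) \<and>
     continuous_on UNIV (\<lambda>p::real \<times> 'a. fst p *\<^sub>R snd p) \<and>
     (\<forall>U (x::'a). open U \<and> x \<in> U \<longrightarrow> (\<exists>V. open V \<and> convex V \<and> x \<in> V \<and> V \<subseteq> U))"

definition clconv :: "'a::{real_vector,topological_space} set \<Rightarrow> 'a set" where
  "clconv S = (\<lambda>C. convex C \<and> closed C) hull S"

definition rec_cone :: "'a::real_vector set \<Rightarrow> 'a set" where
  "rec_cone C = {y. \<exists>z\<in>C. \<forall>t::real. t \<ge> 0 \<longrightarrow> z + t *\<^sub>R y \<in> C}"

definition msum :: "(nat \<Rightarrow> 'a::real_vector set) \<Rightarrow> nat \<Rightarrow> 'a set" where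
  "msum A k = {(\<Sum>i\<in>{1..k}. x i) | x. \<forall>i\<in>{1..k}. x i \<in> A i}"

end

theory Submission
  imports Defs "HOL-Analysis.Analysis"
begin

lemma lc_add:
  fixes f g :: "'b::topological_space \<Rightarrow> 'a::{real_vector,t2_space}"
  assumes lc: "lc_tvs TYPE('a)" and f: "continuous_on S f" and g: "continuous_on S g"
  shows "continuous_on S (\<lambda>x. f x + g x)"
proof -
  have c: "continuous_on UNIV (\<lambda>p::'a \<times> 'a. fst p + snd p)" using lc unfolding lc_tvs_def by blast
  have "continuous_on S (\<lambda>x. fst (f x, g x) + snd (f x, g x))"
    by (rule continuous_on_compose2[OF c continuous_on_Pair[OF f g]]) auto
  then show ?thesis by simp
qed

lemma lc_scale:
  fixes f :: "'b::topological_space \<Rightarrow> real" and g :: "'b \<Rightarrow> 'a::{real_vector,t2_space}"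
  assumes lc: "lc_tvs TYPE('a)" and f: "continuous_on S f" and g: "continuous_on S g"
  shows "continuous_on S (\<lambda>x. f x *\<^sub>R g x)"
proof -
  have c: "continuous_on UNIV (\<lambda>p::real \<times> 'a. fst p *\<^sub>R snd p)" using lc unfolding lc_tvs_def by blast
  have "continuous_on S (\<lambda>x. fst (f x, g x) *\<^sub>R snd (f x, g x))"
    by (rule continuous_on_compose2[OF c continuous_on_Pair[OF f g]]) auto
  then show ?thesis by simp
qed

lemma lc_convex_nbhd:
  assumes lc: "lc_tvs TYPE('a::{real_vector,t2_space})" and "open U" "(x::'a) \<in> U"
  shows "\<exists>V. open V \<and> convex V \<and> x \<in> V \<and> V \<subseteq> U"
  using assms unfolding lc_tvs_def by blast

lemma lc_convex_closure:
  fixes S :: "'a::{real_vector,t2_space} set"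
  assumes lc: "lc_tvs TYPE('a)" and S: "convex S"
  shows "convex (closure S)"
proof (rule convexI)
  fix x y and u v :: real
  assume x: "x \<in> closure S" and y: "y \<in> closure S" and u: "0 \<le> u" and v: "0 \<le> v" and uv: "u + v = 1"
  define F where "F = (\<lambda>p::'a\<times>'a. u *\<^sub>R fst p + v *\<^sub>R snd p)"
  have cF: "continuous_on UNIV F" unfolding F_def
    by (intro lc_add[OF lc] lc_scale[OF lc] continuous_on_const continuous_on_fst continuous_on_snd continuous_on_id)
  show "u *\<^sub>R x + v *\<^sub>R y \<in> closure S"
    unfolding closure_iff_nhds_not_empty
  proof (intro allI impI)
    fix T U assume TU: "U \<subseteq> T" "open U" "u *\<^sub>R x + v *\<^sub>R y \<in> U"
    have o: "open (F -` U)" by (rule open_vimage[OF TU(2) cF])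
    have "(x,y) \<in> F -` U" using TU by (simp add: F_def)
    then obtain P Q where PQ: "open P" "open Q" "(x,y) \<in> P \<times> Q" "P \<times> Q \<subseteq> F -` U"
      by (rule open_prod_elim[OF o])
    from x PQ obtain a where a: "a \<in> S" "a \<in> P"
      unfolding closure_iff_nhds_not_empty by blast
    from y PQ obtain b where b: "b \<in> S" "b \<in> Q"
      unfolding closure_iff_nhds_not_empty by blast
    have "F (a,b) \<in> U" using PQ a b by blast
    moreover have "F (a,b) \<in> S" using S a b u v uv unfolding F_def convex_def by simp
    ultimately show "S \<inter> T \<noteq> {}" using TU by blast
  qed
qed

lemma clconv_closed: "closed (clconv S)"
  unfolding clconv_def using hull_in[of "\<lambda>C. convex C \<and> closed C" S]
  by (auto intro: convex_Inter closed_Inter)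

lemma clconv_convex: "convex (clconv S)"
  unfolding clconv_def using hull_in[of "\<lambda>C. convex C \<and> closed C" S]
  by (auto intro: convex_Inter closed_Inter)

lemma clconv_sub: "S \<subseteq> clconv S"
  unfolding clconv_def by (rule hull_subset)

lemma clconv_min: "S \<subseteq> T \<Longrightarrow> convex T \<Longrightarrow> closed T \<Longrightarrow> clconv S \<subseteq> T"
  unfolding clconv_def by (rule hull_minimal) auto


lemma key:
  fixes C :: "'a::{real_vector,t2_space} set"
  assumes lc: "lc_tvs TYPE('a)" and Ccl: "closed C" and Ccv: "convex C" and d0: "d0 \<in> C"
    and fV: "finite V"
    and H: "\<forall>t\<ge>0. z + t *\<^sub>R y \<in> closure {c + v | c v. c \<in> C \<and> v \<in> convex hull V}"
    and s: "s > 0"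
  shows "d0 + s *\<^sub>R y \<in> C"
proof (rule ccontr)
  define p where "p = d0 + s *\<^sub>R y"
  assume "d0 + s *\<^sub>R y \<notin> C"
  then have pU: "p \<in> - C" unfolding p_def by simp
  have oU: "open (- C)" using Ccl by auto
  obtain W where W: "open W" "convex W" "p \<in> W" "W \<subseteq> - C"
    using lc_convex_nbhd[OF lc oU pU] by blast
  define M where "M = (\<Inter>v\<in>V. (\<lambda>\<mu>::real. p + \<mu> *\<^sub>R (z - d0 - v)) -` W)"
  have oM: "open M" unfolding M_def
  proof (rule open_INT[OF fV], rule ballI)
    fix v assume "v \<in> V"
    show "open ((\<lambda>\<mu>::real. p + \<mu> *\<^sub>R (z - d0 - v)) -` W)"
      by (rule open_vimage[OF W(1)], intro lc_add[OF lc] lc_scale[OF lc] continuous_on_const continuous_on_id)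
  qed
  have "0 \<in> M" unfolding M_def using W(3) by simp
  then obtain e where e: "e > 0" "ball 0 e \<subseteq> M" using oM open_contains_ball by blast
  define \<mu> where "\<mu> = min (e/2) 1"
  have mu: "\<mu> > 0" "\<mu> \<le> 1" using e unfolding \<mu>_def by auto
  have "\<mu> \<in> ball 0 e" using e mu unfolding \<mu>_def by auto
  then have muM: "\<mu> \<in> M" using e by blast
  define t where "t = s / \<mu>"
  have t0: "t \<ge> 0" using s mu unfolding t_def by simp
  define q0 where "q0 = z + t *\<^sub>R y"
  have q0cl: "q0 \<in> closure {c + v | c v. c \<in> C \<and> v \<in> convex hull V}"
    using H t0 unfolding q0_def by blast
  define g where "g = (\<lambda>v q. (1-\<mu>) *\<^sub>R d0 + \<mu> *\<^sub>R q + (-\<mu>) *\<^sub>R v)"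
  define W' where "W' = (\<Inter>v\<in>V. g v -` W)"
  have oW': "open W'" unfolding W'_def
  proof (rule open_INT[OF fV], rule ballI)
    fix v assume "v \<in> V"
    show "open (g v -` W)" unfolding g_def
      by (rule open_vimage[OF W(1)], intro lc_add[OF lc] lc_scale[OF lc] continuous_on_const continuous_on_id)
  qed
  have gq0: "g v q0 = p + \<mu> *\<^sub>R (z - d0 - v)" for v
  proof -
    have "\<mu> * t = s" using mu unfolding t_def by simp
    then show ?thesis unfolding g_def q0_def p_def
      by (simp add: algebra_simps scaleR_diff_left)
  qed
  have "q0 \<in> W'" unfolding W'_def using muM gq0 unfolding M_def by auto
  then obtain w where w: "w \<in> {c + v | c v. c \<in> C \<and> v \<in> convex hull V}" "w \<in> W'"
    using q0cl oW' unfolding closure_iff_nhds_not_empty by blast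
  then obtain c v' where cv: "w = c + v'" "c \<in> C" "v' \<in> convex hull V" by blast
  obtain u where u: "\<forall>x\<in>V. 0 \<le> u x" "sum u V = 1" "(\<Sum>x\<in>V. u x *\<^sub>R x) = v'"
    using cv(3) convex_hull_finite[OF fV] by auto
  define r where "r = (1-\<mu>) *\<^sub>R d0 + \<mu> *\<^sub>R c"
  have rC: "r \<in> C" unfolding r_def using Ccv d0 cv(2) mu by (simp add: convex_def)
  have "(\<Sum>x\<in>V. u x *\<^sub>R g x w) = (\<Sum>x\<in>V. u x *\<^sub>R ((1-\<mu>) *\<^sub>R d0 + \<mu> *\<^sub>R w)) + (\<Sum>x\<in>V. u x *\<^sub>R ((-\<mu>) *\<^sub>R x))"
    unfolding g_def by (subst sum.distrib[symmetric], rule sum.cong, simp, rule scaleR_add_right)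
  also have "\<dots> = (sum u V) *\<^sub>R ((1-\<mu>) *\<^sub>R d0 + \<mu> *\<^sub>R w) + (-\<mu>) *\<^sub>R (\<Sum>x\<in>V. u x *\<^sub>R x)"
    by (simp add: scaleR_sum_left scaleR_sum_right mult.commute)
  also have "\<dots> = r" using u cv(1) unfolding r_def by (simp add: algebra_simps)
  finally have req: "(\<Sum>x\<in>V. u x *\<^sub>R g x w) = r" .
  have "(\<Sum>x\<in>V. u x *\<^sub>R g x w) \<in> W"
    by (rule convex_sum[OF fV W(2) u(2)]) (use u w(2) in \<open>auto simp: W'_def\<close>)
  then have "r \<in> W" using req by simp
  then show False using rC W(4) by blast
qed


lemma key_rec:
  fixes C :: "'a::{real_vector,t2_space} set"
  assumes lc: "lc_tvs TYPE('a)" and Ccl: "closed C" and Ccv: "convex C" and ne: "C \<noteq> {}"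
    and fV: "finite V"
    and H: "\<forall>t\<ge>0. z + t *\<^sub>R y \<in> closure {c + v | c v. c \<in> C \<and> v \<in> convex hull V}"
  shows "y \<in> rec_cone C"
proof -
  obtain d0 where d0: "d0 \<in> C" using ne by blast
  have "\<forall>s::real. s \<ge> 0 \<longrightarrow> d0 + s *\<^sub>R y \<in> C"
  proof (intro allI impI)
    fix s :: real assume "s \<ge> 0"
    then consider "s = 0" | "s > 0" by linarith
    then show "d0 + s *\<^sub>R y \<in> C"
      by cases (use d0 key[OF lc Ccl Ccv d0 fV H] in auto)
  qed
  then show ?thesis unfolding rec_cone_def using d0 by blast
qed

lemma sum_set_convex:
  assumes "convex (C::'a::real_vector set)"
  shows "convex {c + v | c v. c \<in> C \<and> v \<in> convex hull V}"
proof -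
  have "{c + v | c v. c \<in> C \<and> v \<in> convex hull V} = (\<Union>x\<in>C. \<Union>y\<in>convex hull V. {x + y})" by blast
  then show ?thesis using convex_sums[OF assms convex_convex_hull] by simp
qed

lemma clconv_into:
  fixes C :: "'a::{real_vector,t2_space} set"
  assumes lc: "lc_tvs TYPE('a)" and Ccv: "convex C"
    and S: "S \<subseteq> {c + v | c v. c \<in> C \<and> v \<in> V}"
  shows "clconv S \<subseteq> closure {c + v | c v. c \<in> C \<and> v \<in> convex hull V}"
proof (rule clconv_min)
  show "S \<subseteq> closure {c + v | c v. c \<in> C \<and> v \<in> convex hull V}"
  proof
    fix w assume "w \<in> S"
    then obtain c v where cv: "w = c + v" "c \<in> C" "v \<in> V" using S by blast
    have "v \<in> convex hull V" using cv(3) by (rule hull_inc)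
    then have "w \<in> {c + v | c v. c \<in> C \<and> v \<in> convex hull V}" using cv by blast
    then show "w \<in> closure {c + v | c v. c \<in> C \<and> v \<in> convex hull V}"
      by (rule subsetD[OF closure_subset])
  qed
  show "convex (closure {c + v | c v. c \<in> C \<and> v \<in> convex hull V})"
    by (rule lc_convex_closure[OF lc sum_set_convex[OF Ccv]])
qed simp

theorem lemma2:
  fixes A :: "'a::{real_vector,t2_space} set" and As :: "nat \<Rightarrow> 'a set" and k :: nat
  assumes "lc_tvs TYPE('a)"
    and "k \<ge> 2" and "A \<noteq> {}" and "\<forall>i\<in>{1..k}. As i \<noteq> {}"
  shows "rec_cone (clconv (A \<union> (\<Union>i\<in>{1..k}. As i))) = rec_cone (clconv (A \<union> msum As k))"
proof -
  note lc = assms(1)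
  define C1 where "C1 = clconv (A \<union> (\<Union>i\<in>{1..k}. As i))"
  define C2 where "C2 = clconv (A \<union> msum As k)"
  obtain a where a: "a \<in> A" using assms(3) by blast
  define aa where "aa = (\<lambda>i. SOME x. x \<in> As i)"
  have aa: "aa i \<in> As i" if "i \<in> {1..k}" for i
  proof -
    have "As i \<noteq> {}" using assms(4) that by blast
    then show ?thesis unfolding aa_def by (simp add: some_in_eq)
  qed
  have aC1: "a \<in> C1" using a clconv_sub[of "A \<union> (\<Union>i\<in>{1..k}. As i)"] unfolding C1_def by blast
  have aC2: "a \<in> C2" using a clconv_sub[of "A \<union> msum As k"] unfolding C2_def by blast
  have C1cl: "closed C1" "convex C1" unfolding C1_def by (rule clconv_closed, rule clconv_convex)
  have C2cl: "closed C2" "convex C2" unfolding C2_def by (rule clconv_closed, rule clconv_convex)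
  have kpos: "real k > 0" using assms(2) by simp
  show ?thesis unfolding C1_def[symmetric] C2_def[symmetric]
  proof
    show "rec_cone C1 \<subseteq> rec_cone C2"
    proof
      fix y assume "y \<in> rec_cone C1"
      then obtain z where z: "z \<in> C1" "\<forall>t::real. t \<ge> 0 \<longrightarrow> z + t *\<^sub>R y \<in> C1"
        unfolding rec_cone_def by blast
      define c where "c = (\<Sum>i\<in>{1..k}. aa i)"
      define V where "V = insert 0 ((\<lambda>j. aa j - c) ` {1..k})"
      have fV: "finite V" unfolding V_def by simp
      have sub: "A \<union> (\<Union>i\<in>{1..k}. As i) \<subseteq> {c' + v | c' v. c' \<in> C2 \<and> v \<in> V}"
      proof
        fix x assume "x \<in> A \<union> (\<Union>i\<in>{1..k}. As i)"
        then consider "x \<in> A" | j where "j \<in> {1..k}" "x \<in> As j" by blast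
        then show "x \<in> {c' + v | c' v. c' \<in> C2 \<and> v \<in> V}"
        proof cases
          case 1
          then have "x \<in> C2" using clconv_sub[of "A \<union> msum As k"] unfolding C2_def by blast
          then show ?thesis unfolding V_def by force
        next
          case 2
          have fin: "finite {1..k}" by simp
          have "(\<Sum>i\<in>{1..k}. (aa(j:=x)) i) = (aa(j:=x)) j + (\<Sum>i\<in>{1..k}-{j}. (aa(j:=x)) i)"
            by (rule sum.remove[OF fin 2(1)])
          also have "(aa(j:=x)) j = x" by simp
          also have "(\<Sum>i\<in>{1..k}-{j}. (aa(j:=x)) i) = (\<Sum>i\<in>{1..k}-{j}. aa i)"
            by (rule sum.cong) auto
          finally have e1: "(\<Sum>i\<in>{1..k}. (aa(j:=x)) i) = x + (\<Sum>i\<in>{1..k}-{j}. aa i)" .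
          have e2: "c = aa j + (\<Sum>i\<in>{1..k}-{j}. aa i)"
            unfolding c_def using sum.remove[OF fin 2(1)] by simp
          have "x + c - aa j \<in> msum As k"
            unfolding msum_def using e1 e2 2 aa
            by (intro CollectI exI[of _ "aa(j:=x)"]) (auto simp: algebra_simps)
          then have m: "x + c - aa j \<in> C2" using clconv_sub[of "A \<union> msum As k"] unfolding C2_def by blast
          have "x = (x + c - aa j) + (aa j - c)" by simp
          moreover have "aa j - c \<in> V" unfolding V_def using 2 by blast
          ultimately show ?thesis using m by blast
        qed
      qed
      have Csub: "C1 \<subseteq> closure {c' + v | c' v. c' \<in> C2 \<and> v \<in> convex hull V}"
        unfolding C1_def by (rule clconv_into[OF lc C2cl(2) sub])
      have H1: "\<forall>t\<ge>0. z + t *\<^sub>R y \<in> closure {c' + v | c' v. c' \<in> C2 \<and> v \<in> convex hull V}"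
      proof (intro allI impI)
        fix t :: real assume "t \<ge> 0"
        then have "z + t *\<^sub>R y \<in> C1" using z(2) by blast
        then show "z + t *\<^sub>R y \<in> closure {c' + v | c' v. c' \<in> C2 \<and> v \<in> convex hull V}"
          using Csub by (rule subsetD[rotated])
      qed
      have ne2: "C2 \<noteq> {}" using aC2 by blast
      show "y \<in> rec_cone C2" by (rule key_rec[OF lc C2cl(1) C2cl(2) ne2 fV H1])
    qed
  next
    show "rec_cone C2 \<subseteq> rec_cone C1"
    proof
      fix y assume "y \<in> rec_cone C2"
      then obtain z where z: "z \<in> C2" "\<forall>t::real. t \<ge> 0 \<longrightarrow> z + t *\<^sub>R y \<in> C2"
        unfolding rec_cone_def by blast
      define V where "V = {0, - ((1 - 1/real k) *\<^sub>R a)}"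
      have fV: "finite V" unfolding V_def by simp
      define E where "E = closure {c + v | c v. c \<in> C1 \<and> v \<in> convex hull V}"
      define P where "P = (\<lambda>x. (1/real k) *\<^sub>R x) -` E"
      have Pcl: "closed P" unfolding P_def E_def
        by (rule closed_vimage[OF closed_closure], intro lc_scale[OF lc] continuous_on_const continuous_on_id)
      have Ecv: "convex E" unfolding E_def by (rule lc_convex_closure[OF lc sum_set_convex[OF C1cl(2)]])
      have Pcv: "convex P" unfolding P_def
      proof (rule convexI)
        fix x x' :: "'a" fix u v :: real
        assume that: "x \<in> (\<lambda>x. (1/real k) *\<^sub>R x) -` E" "x' \<in> (\<lambda>x. (1/real k) *\<^sub>R x) -` E"
          "0 \<le> u" "0 \<le> v" "u + v = 1"
        have "u *\<^sub>R ((1/real k) *\<^sub>R x) + v *\<^sub>R ((1/real k) *\<^sub>R x') \<in> E"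
          by (rule convexD[OF Ecv]) (use that in auto)
        then show "u *\<^sub>R x + v *\<^sub>R x' \<in> (\<lambda>x. (1/real k) *\<^sub>R x) -` E"
          by (simp add: scaleR_add_right)
      qed
      have inE2: "w + v \<in> E" if "w \<in> C1" "v \<in> V" for w v
      proof -
        have "v \<in> convex hull V" using that hull_subset[of V convex] by blast
        then have "w + v \<in> {c + v | c v. c \<in> C1 \<and> v \<in> convex hull V}" using that by blast
        then show ?thesis using closure_subset[of "{c + v | c v. c \<in> C1 \<and> v \<in> convex hull V}"] unfolding E_def by blast
      qed
      have sub: "A \<union> msum As k \<subseteq> P"
      proof
        fix x assume "x \<in> A \<union> msum As k"
        then consider "x \<in> A" | "x \<in> msum As k" by blast
        then show "x \<in> P"
        proof cases
          case 1
          have xC: "x \<in> C1" using 1 clconv_sub[of "A \<union> (\<Union>i\<in>{1..k}. As i)"] unfolding C1_def by blast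
          have w: "(1/real k) *\<^sub>R x + (1 - 1/real k) *\<^sub>R a \<in> C1"
          proof (rule convexD[OF C1cl(2) xC aC1])
            show "0 \<le> 1/real k" using kpos by simp
            have "1/real k \<le> 1" using assms(2) by simp
            then show "0 \<le> 1 - 1/real k" by simp
          qed simp
          have eq: "(1/real k) *\<^sub>R x = ((1/real k) *\<^sub>R x + (1 - 1/real k) *\<^sub>R a) + (- ((1 - 1/real k) *\<^sub>R a))"
            by simp
          have vm: "- ((1 - 1/real k) *\<^sub>R a) \<in> V" unfolding V_def by blast
          have "(1/real k) *\<^sub>R x \<in> E" using inE2[OF w vm] eq by metis
          then show ?thesis unfolding P_def by simp
        next
          case 2
          then obtain xs where xs: "x = (\<Sum>i\<in>{1..k}. xs i)" "\<forall>i\<in>{1..k}. xs i \<in> As i"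
            unfolding msum_def by blast
          have xsC: "xs i \<in> C1" if "i \<in> {1..k}" for i
            using xs(2) that clconv_sub[of "A \<union> (\<Union>i\<in>{1..k}. As i)"] unfolding C1_def by blast
          have s1: "(\<Sum>i\<in>{1..k}. 1 / real k) = 1" using kpos by simp
          have m': "(\<Sum>i\<in>{1..k}. (1/real k) *\<^sub>R xs i) \<in> C1"
            by (rule convex_sum[OF _ C1cl(2) s1]) (use xsC in auto)
          have eq: "(1/real k) *\<^sub>R x = (\<Sum>i\<in>{1..k}. (1/real k) *\<^sub>R xs i) + 0"
            unfolding xs(1) by (simp add: scaleR_sum_right)
          have v0: "0 \<in> V" unfolding V_def by simp
          have "(1/real k) *\<^sub>R x \<in> E" using inE2[OF m' v0] eq by metis
          then show ?thesis unfolding P_def by simp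
        qed
      qed
      have C2P: "C2 \<subseteq> P" unfolding C2_def by (rule clconv_min[OF sub Pcv Pcl])
      have H: "\<forall>t\<ge>0. (1/real k) *\<^sub>R z + t *\<^sub>R ((1/real k) *\<^sub>R y) \<in> E"
      proof (intro allI impI)
        fix t :: real assume "t \<ge> 0"
        then have "z + t *\<^sub>R y \<in> P" using z C2P by blast
        then have "(1/real k) *\<^sub>R (z + t *\<^sub>R y) \<in> E" unfolding P_def by simp
        moreover have "(1/real k) *\<^sub>R (z + t *\<^sub>R y) = (1/real k) *\<^sub>R z + t *\<^sub>R ((1/real k) *\<^sub>R y)"
          by (simp add: scaleR_add_right)
        ultimately show "(1/real k) *\<^sub>R z + t *\<^sub>R ((1/real k) *\<^sub>R y) \<in> E" by metis
      qed
      have ne1: "C1 \<noteq> {}" using aC1 by blast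
      have "(1/real k) *\<^sub>R y \<in> rec_cone C1"
        by (rule key_rec[OF lc C1cl(1) C1cl(2) ne1 fV H[unfolded E_def]])
      then obtain d where d: "d \<in> C1" "\<forall>t::real. t \<ge> 0 \<longrightarrow> d + t *\<^sub>R ((1/real k) *\<^sub>R y) \<in> C1"
        unfolding rec_cone_def by blast
      have "\<forall>t::real. t \<ge> 0 \<longrightarrow> d + t *\<^sub>R y \<in> C1"
      proof (intro allI impI)
        fix t :: real assume t: "t \<ge> 0"
        have tk: "t * real k \<ge> 0" using t kpos by simp
        have m: "d + (t * real k) *\<^sub>R ((1/real k) *\<^sub>R y) \<in> C1" using d(2) tk by blast
        have "(t * real k) *\<^sub>R ((1/real k) *\<^sub>R y) = t *\<^sub>R y" using kpos by simp
        then show "d + t *\<^sub>R y \<in> C1" using m by metis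
      qed
      then show "y \<in> rec_cone C1" unfolding rec_cone_def using d by blast
    qed
  qed
qed

end
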